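(* Let $T\in B(\mathcal{F})$ be a block-diagonal operator. If the block-diagonal operator $T-\sum_{i=1}^d R_iTR_i^*$ belongs to $\mathcal{S}$, then $T\in\mathcal{C}=C^*(L_1,\ldots,L_d)$.
   Context: $d\ge2$; $\xi_1,\ldots,\xi_d$ is the standard orthonormal basis of $\mathbb{C}^d$. $\mathcal{F}=\bigoplus_{n\ge0}\mathcal{F}_n$ is the full Fock space, $\mathcal{F}_0=\mathbb{C}\Omega$, $\mathcal{F}_n=(\mathbb{C}^d)^{\otimes n}$ with the usual inner product. $L_j\eta=\xi_j\otimes\eta$, $R_j\eta=\eta\otimes\xi_j$ (with $L_j\Omega=R_j\Omega=\xi_j$). $T$ is block-diagonal if $T(\mathcal{F}_n)\subseteq\mathcal{F}_n$ for all $n$. $\mathcal{S}$ is the set of operators $S\in B(\mathcal{F})$ which are band-limited (there is $b\ge0$ with $S(\mathcal{F}_n)\subseteq\bigoplus_{|m-n|\le b}\mathcal{F}_m$ for all $n$) and summable ($\sum_{n\ge0}\|S|_{\mathcal{F}_n}\|<\infty$). *)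

theory Defs
  imports "HOL-Analysis.Analysis"
begin

text \<open>Full Fock space over C^d, d = CARD('i), realised as l^2 of words:
  the basis vector xi_{i1} (x) ... (x) xi_{in} corresponds to the word [i1,...,in],
  Omega corresponds to the empty word.\<close>

type_synonym 'i vec = "'i list \<Rightarrow> complex"
type_synonym 'i op = "'i vec \<Rightarrow> 'i vec"

definition ell2 :: "'i vec set" where
  "ell2 = {f. (\<lambda>w. (cmod (f w))\<^sup>2) summable_on UNIV}"

definition vnorm :: "'i vec \<Rightarrow> real" where
  "vnorm f = sqrt (\<Sum>\<^sub>\<infinity>w. (cmod (f w))\<^sup>2)"

text \<open>Bounded (complex-linear) operators on the Fock space; only their action on ell2 matters.\<close>
definition bounded_op :: "'i op \<Rightarrow> bool" where
  "bounded_op T \<longleftrightarrow>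
     (\<forall>f\<in>ell2. T f \<in> ell2) \<and>
     (\<forall>f\<in>ell2. \<forall>g\<in>ell2. \<forall>a b. T (\<lambda>w. a * f w + b * g w) = (\<lambda>w. a * T f w + b * T g w)) \<and>
     (\<exists>C. \<forall>f\<in>ell2. vnorm (T f) \<le> C * vnorm f)"

definition opnorm :: "'i op \<Rightarrow> real" where
  "opnorm T = Sup {vnorm (T f) | f. f \<in> ell2 \<and> vnorm f \<le> 1}"

definition in_level :: "nat \<Rightarrow> 'i vec \<Rightarrow> bool" where
  "in_level n f \<longleftrightarrow> (\<forall>w. length w \<noteq> n \<longrightarrow> f w = 0)"

definition block_diagonal :: "'i op \<Rightarrow> bool" where
  "block_diagonal T \<longleftrightarrow> (\<forall>n f. f \<in> ell2 \<and> in_level n f \<longrightarrow> in_level n (T f))"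

definition level_norm :: "'i op \<Rightarrow> nat \<Rightarrow> real" where
  "level_norm S n = Sup {vnorm (S f) | f. f \<in> ell2 \<and> in_level n f \<and> vnorm f \<le> 1}"

definition band_limited :: "'i op \<Rightarrow> bool" where
  "band_limited S \<longleftrightarrow> (\<exists>b::nat. \<forall>n f. f \<in> ell2 \<and> in_level n f \<longrightarrow>
       (\<forall>w. \<bar>int (length w) - int n\<bar> > int b \<longrightarrow> S f w = 0))"

definition classS :: "'i op set" where
  "classS = {S. bounded_op S \<and> band_limited S \<and> summable (level_norm S)}"

definition Lop :: "'i \<Rightarrow> 'i op" where
  "Lop j f = (\<lambda>w. case w of [] \<Rightarrow> 0 | i # v \<Rightarrow> (if i = j then f v else 0))"

definition Ladj :: "'i \<Rightarrow> 'i op" where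
  "Ladj j f = (\<lambda>w. f (j # w))"

definition Rop :: "'i \<Rightarrow> 'i op" where
  "Rop j f = (\<lambda>w. if w \<noteq> [] \<and> last w = j then f (butlast w) else 0)"

definition Radj :: "'i \<Rightarrow> 'i op" where
  "Radj j f = (\<lambda>w. f (w @ [j]))"

text \<open>The (non-closed) algebra generated by L_j, L_j^*; it is a *-algebra, since the
  generating set is closed under adjoints.\<close>
inductive_set polyalg :: "'i op set" where
  gen_L: "Lop j \<in> polyalg"
| gen_Ladj: "Ladj j \<in> polyalg"
| add: "A \<in> polyalg \<Longrightarrow> B \<in> polyalg \<Longrightarrow> (\<lambda>f w. A f w + B f w) \<in> polyalg"
| smult: "A \<in> polyalg \<Longrightarrow> (\<lambda>f w. c * A f w) \<in> polyalg"
| comp: "A \<in> polyalg \<Longrightarrow> B \<in> polyalg \<Longrightarrow> (A \<circ> B) \<in> polyalg"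

definition Calg :: "'i op set" where
  "Calg = {T. bounded_op T \<and>
     (\<forall>e>0. \<exists>P\<in>polyalg. opnorm (\<lambda>f w. T f w - P f w) < e)}"

end

theory Submission
  imports Defs
begin
definition words :: "nat \<Rightarrow> ('i::finite) list set" where "words n = {w. length w = n}"

lemma finite_words[simp]: "finite (words n :: ('i::finite) list set)"
proof -
  have "finite {xs::'i list. set xs \<subseteq> UNIV \<and> length xs = n}" by (rule finite_lists_length_eq) simp
  then show ?thesis by (simp add: words_def)
qed

lemma level_ell2: assumes "in_level n (f::('i::finite) vec)" shows "f \<in> ell2"
proof -
  have "(\<lambda>w. (cmod (f w))\<^sup>2) summable_on words n" by simp
  then show ?thesis unfolding ell2_def
    by (subst (asm) summable_on_cong_neutral[where T=UNIV and g="\<lambda>w. (cmod (f w))\<^sup>2"])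
       (use assms in \<open>auto simp: in_level_def words_def\<close>)
qed

lemma vnorm_level: assumes "in_level n (f::('i::finite) vec)"
  shows "vnorm f = L2_set (\<lambda>w. cmod (f w)) (words n)"
proof -
  have "(\<Sum>\<^sub>\<infinity>w. (cmod (f w))\<^sup>2) = (\<Sum>\<^sub>\<infinity>w\<in>words n. (cmod (f w))\<^sup>2)"
    by (rule infsum_cong_neutral) (use assms in \<open>auto simp: in_level_def words_def\<close>)
  then show ?thesis by (simp add: vnorm_def L2_set_def)
qed

lemma ell2_lin: assumes "f \<in> ell2" "g \<in> ell2" shows "(\<lambda>w. a * f w + b * g w) \<in> ell2"
proof -
  have s: "(\<lambda>w. 2*(cmod a)\<^sup>2 * (cmod (f w))\<^sup>2 + 2*(cmod b)\<^sup>2 * (cmod (g w))\<^sup>2) summable_on UNIV"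
    using assms unfolding ell2_def
    by (intro summable_on_add summable_on_cmult_right) auto
  have sq2: "(p+q)\<^sup>2 \<le> 2*p\<^sup>2 + 2*q\<^sup>2" for p q :: real
    using sum_squares_bound[of p q] by (simp add: power2_eq_square algebra_simps)
  have le: "(cmod (a * f w + b * g w))\<^sup>2 \<le> 2*(cmod a)\<^sup>2 * (cmod (f w))\<^sup>2 + 2*(cmod b)\<^sup>2 * (cmod (g w))\<^sup>2" for w
  proof -
    have "cmod (a * f w + b * g w) \<le> cmod a * cmod (f w) + cmod b * cmod (g w)"
      by (metis norm_mult norm_triangle_ineq)
    then have "(cmod (a * f w + b * g w))\<^sup>2 \<le> (cmod a * cmod (f w) + cmod b * cmod (g w))\<^sup>2"
      by (simp add: power_mono)
    also have "\<dots> \<le> 2*(cmod a * cmod (f w))\<^sup>2 + 2*(cmod b * cmod (g w))\<^sup>2"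
      using sq2 by blast
    also have "\<dots> = 2*(cmod a)\<^sup>2 * (cmod (f w))\<^sup>2 + 2*(cmod b)\<^sup>2 * (cmod (g w))\<^sup>2"
      by (simp add: power_mult_distrib)
    finally show ?thesis .
  qed
  show ?thesis unfolding ell2_def mem_Collect_eq
    by (rule summable_on_comparison_test[OF s]) (use le in auto)
qed

lemma ell2_zero[simp]: "(\<lambda>w. 0) \<in> ell2" by (simp add: ell2_def)

lemma ell2_add: "f \<in> ell2 \<Longrightarrow> g \<in> ell2 \<Longrightarrow> (\<lambda>w. f w + g w) \<in> ell2"
  using ell2_lin[of f g 1 1] by simp
lemma ell2_diff: "f \<in> ell2 \<Longrightarrow> g \<in> ell2 \<Longrightarrow> (\<lambda>w. f w - g w) \<in> ell2"
  using ell2_lin[of f g 1 "-1"] by simp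
lemma ell2_scale: "f \<in> ell2 \<Longrightarrow> (\<lambda>w. c * f w) \<in> ell2"
  using ell2_lin[of f f c 0] by simp

lemma ell2_sum: "finite A \<Longrightarrow> (\<forall>a\<in>A. g a \<in> ell2) \<Longrightarrow> (\<lambda>w. \<Sum>a\<in>A. g a w) \<in> ell2"
  by (induction A rule: finite_induct) (auto intro: ell2_add)

lemma vnorm_nonneg: "vnorm f \<ge> 0" by (simp add: vnorm_def infsum_nonneg)

lemma cmod_le_vnorm: assumes "f \<in> ell2" shows "cmod (f x) \<le> vnorm f"
proof -
  have "(\<Sum>w\<in>{x}. (cmod (f w))\<^sup>2) \<le> (\<Sum>\<^sub>\<infinity>w. (cmod (f w))\<^sup>2)"
    by (rule finite_sum_le_infsum) (use assms in \<open>auto simp: ell2_def\<close>)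
  then show ?thesis unfolding vnorm_def by (simp add: real_le_rsqrt)
qed

lemma bop_lin: "bounded_op T \<Longrightarrow> f \<in> ell2 \<Longrightarrow> g \<in> ell2 \<Longrightarrow>
   T (\<lambda>w. a * f w + b * g w) = (\<lambda>w. a * T f w + b * T g w)"
  by (simp add: bounded_op_def)

lemma bop_zero: assumes "bounded_op T" shows "T (\<lambda>w. 0) = (\<lambda>w. 0)"
  using bop_lin[OF assms ell2_zero ell2_zero, of 0 0] by simp

lemma bop_add: "bounded_op T \<Longrightarrow> f \<in> ell2 \<Longrightarrow> g \<in> ell2 \<Longrightarrow> T (\<lambda>w. f w + g w) = (\<lambda>w. T f w + T g w)"
  using bop_lin[of T f g 1 1] by simp
lemma bop_diff: "bounded_op T \<Longrightarrow> f \<in> ell2 \<Longrightarrow> g \<in> ell2 \<Longrightarrow> T (\<lambda>w. f w - g w) = (\<lambda>w. T f w - T g w)"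
  using bop_lin[of T f g 1 "-1"] by simp
lemma bop_scale: "bounded_op T \<Longrightarrow> f \<in> ell2 \<Longrightarrow> T (\<lambda>w. c * f w) = (\<lambda>w. c * T f w)"
  using bop_lin[of T f f c 0] by simp

lemma bop_sum: assumes "bounded_op T" shows "finite A \<Longrightarrow> (\<forall>a\<in>A. g a \<in> ell2) \<Longrightarrow>
   T (\<lambda>w. \<Sum>a\<in>A. g a w) = (\<lambda>w. \<Sum>a\<in>A. T (g a) w)"
proof (induction A rule: finite_induct)
  case empty then show ?case using bop_zero[OF assms] by simp
next
  case (insert x F)
  have "T (\<lambda>w. \<Sum>a\<in>insert x F. g a w) = T (\<lambda>w. g x w + (\<Sum>a\<in>F. g a w))"
    using insert by simp
  also have "\<dots> = (\<lambda>w. T (g x) w + T (\<lambda>w. \<Sum>a\<in>F. g a w) w)"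
    using insert by (intro bop_add[OF assms]) (auto intro: ell2_sum)
  finally show ?case using insert by simp
qed

lemma bop_ell2: "bounded_op T \<Longrightarrow> f \<in> ell2 \<Longrightarrow> T f \<in> ell2" by (simp add: bounded_op_def)

lemma bop_bound: assumes "bounded_op T" shows "\<exists>C>0. \<forall>f\<in>ell2. vnorm (T f) \<le> C * vnorm f"
proof -
  obtain C where C: "\<forall>f\<in>ell2. vnorm (T f) \<le> C * vnorm f" using assms by (auto simp: bounded_op_def)
  have "vnorm (T f) \<le> (max C 1) * vnorm f" if "f \<in> ell2" for f
    using C that order_trans mult_right_mono[OF max.cobounded1 vnorm_nonneg] by blast
  then show ?thesis by (intro exI[of _ "max C 1"]) auto
qed

definition restr :: "nat \<Rightarrow> 'i vec \<Rightarrow> 'i vec" where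
  "restr n f = (\<lambda>w. if length w = n then f w else 0)"

lemma restr_level[simp]: "in_level n (restr n f)" by (simp add: restr_def in_level_def)

lemma tail_small:
  fixes f :: "('i::finite) vec"
  assumes "f \<in> ell2" "e > 0"
  shows "\<exists>K. \<forall>t. t \<in> ell2 \<longrightarrow> (\<forall>w. length w \<le> K \<longrightarrow> t w = 0) \<longrightarrow> (\<forall>w. cmod (t w) \<le> cmod (f w)) \<longrightarrow> vnorm t \<le> e"
proof -
  define s where "s = (\<lambda>w. (cmod (f w))\<^sup>2)"
  have ss: "s summable_on UNIV" using assms by (simp add: ell2_def s_def)
  obtain F where F: "finite F" "dist (sum s F) (infsum s UNIV) \<le> e\<^sup>2"
    using infsum_finite_approximation[OF ss, of "e\<^sup>2"] assms by auto
  define K where "K = Max (insert 0 (length ` F))"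
  have FK: "w \<in> F \<Longrightarrow> length w \<le> K" for w using F(1) by (auto simp: K_def)
  show ?thesis
  proof (intro exI allI impI)
    fix t :: "'i vec"
    assume t: "t \<in> ell2" "\<forall>w. length w \<le> K \<longrightarrow> t w = 0" "\<forall>w. cmod (t w) \<le> cmod (f w)"
    define u where "u = (\<lambda>w. if w \<in> F then s w else 0)"
    have su: "u summable_on UNIV"
      by (subst summable_on_cong_neutral[where T=F and g=s]) (use F in \<open>auto simp: u_def\<close>)
    have iu: "infsum u UNIV = sum s F"
      by (subst infsum_cong_neutral[where T=F and g=s]) (use F in \<open>auto simp: u_def\<close>)
    have st: "(\<lambda>w. (cmod (t w))\<^sup>2) summable_on UNIV" using t by (simp add: ell2_def)
    have "(\<Sum>\<^sub>\<infinity>w. (cmod (t w))\<^sup>2) + sum s F = (\<Sum>\<^sub>\<infinity>w. (cmod (t w))\<^sup>2 + u w)"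
      using infsum_add[OF st su] iu by simp
    also have "\<dots> \<le> infsum s UNIV"
    proof (rule infsum_mono[OF summable_on_add[OF st su] ss])
      fix w :: "'i list"
      show "(cmod (t w))\<^sup>2 + u w \<le> s w"
      proof (cases "w \<in> F")
        case True then show ?thesis using FK[OF True] t(2) by (simp add: u_def)
      next
        case False then show ?thesis using t(3) by (simp add: u_def s_def power_mono)
      qed
    qed
    finally have "(\<Sum>\<^sub>\<infinity>w. (cmod (t w))\<^sup>2) \<le> e\<^sup>2" using F(2) by (simp add: dist_real_def)
    then have "vnorm t \<le> sqrt (e\<^sup>2)" unfolding vnorm_def by (rule real_sqrt_le_mono)
    then show "vnorm t \<le> e" using assms by simp
  qed
qed

lemma bd_restr:
  fixes T :: "('i::finite) op"
  assumes T: "bounded_op T" "block_diagonal T" and f: "f \<in> ell2" and x: "length x = n"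
  shows "T f x = T (restr n f) x"
proof -
  define h where "h = (\<lambda>w. if length w = n then 0 else f w)"
  have rf: "restr n f \<in> ell2" using level_ell2[OF restr_level] .
  have heq: "h = (\<lambda>w. f w - restr n f w)" by (auto simp: h_def restr_def)
  have h2: "h \<in> ell2" unfolding heq by (rule ell2_diff[OF f rf])
  have feq: "f = (\<lambda>w. restr n f w + h w)" by (auto simp: h_def restr_def)
  have Tf: "T f = (\<lambda>w. T (restr n f) w + T h w)"
    by (subst feq) (rule bop_add[OF T(1) rf h2])
  obtain C where C: "C > 0" "\<forall>g\<in>ell2. vnorm (T g) \<le> C * vnorm g" using bop_bound[OF T(1)] by blast
  have small: "cmod (T h x) \<le> e" if e: "e > 0" for e
  proof -
    obtain K where K: "\<And>t. t \<in> ell2 \<Longrightarrow> (\<forall>w. length w \<le> K \<longrightarrow> t w = 0) \<Longrightarrow> (\<forall>w. cmod (t w) \<le> cmod (f w)) \<Longrightarrow> vnorm t \<le> e / C"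
      using tail_small[OF f, of "e/C"] e C by auto
    define hK where "hK = (\<lambda>w. \<Sum>m\<in>{..K}. restr m h w)"
    define tK where "tK = (\<lambda>w. h w - hK w)"
    have hK2: "hK \<in> ell2" unfolding hK_def by (rule ell2_sum) (auto intro: level_ell2[OF restr_level])
    have tK2: "tK \<in> ell2" unfolding tK_def by (rule ell2_diff[OF h2 hK2])
    have hKw: "hK w = (if length w \<le> K then h w else 0)" for w
      by (simp add: hK_def restr_def)
    have "T hK = (\<lambda>w. \<Sum>m\<in>{..K}. T (restr m h) w)"
      unfolding hK_def by (rule bop_sum[OF T(1)]) (auto intro: level_ell2[OF restr_level])
    moreover have "T (restr m h) x = 0" for m
    proof (cases "m = n")
      case True
      then have "restr m h = (\<lambda>w. 0)" by (auto simp: restr_def h_def)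
      then show ?thesis using bop_zero[OF T(1)] by simp
    next
      case False
      have "in_level m (T (restr m h))" using T(2) level_ell2[OF restr_level, of m h] restr_level[of m h]
        unfolding block_diagonal_def by blast
      then show ?thesis using False x by (auto simp: in_level_def)
    qed
    ultimately have ThK: "T hK x = 0" by simp
    have "h = (\<lambda>w. hK w + tK w)" by (simp add: tK_def)
    then have "T h = (\<lambda>w. T hK w + T tK w)" using bop_add[OF T(1) hK2 tK2] by simp
    then have "T h x = T tK x" using ThK by simp
    have "vnorm tK \<le> e / C"
      by (rule K[OF tK2]) (auto simp: tK_def hKw h_def)
    have "cmod (T tK x) \<le> vnorm (T tK)" by (rule cmod_le_vnorm[OF bop_ell2[OF T(1) tK2]])
    also have "\<dots> \<le> C * vnorm tK" using C tK2 by blast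
    also have "\<dots> \<le> C * (e / C)" using \<open>vnorm tK \<le> e / C\<close> C by (intro mult_left_mono) auto
    also have "\<dots> = e" using C by simp
    finally show ?thesis using \<open>T h x = T tK x\<close> by simp
  qed
  have "T h x = 0"
  proof (rule ccontr)
    assume "T h x \<noteq> 0"
    then have "cmod (T h x) > 0" by simp
    then show False using small[of "cmod (T h x) / 2"] by simp
  qed
  then show ?thesis using Tf by simp
qed

primrec Lw :: "'i list \<Rightarrow> 'i op" where
  "Lw [] = id" | "Lw (i # u) = Lop i \<circ> Lw u"

primrec Law :: "'i list \<Rightarrow> 'i op" where
  "Law [] = id" | "Law (i # v) = Law v \<circ> Ladj i"

lemma Lw_apply: "Lw u f x = (if take (length u) x = u then f (drop (length u) x) else 0)"
proof (induction u arbitrary: x)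
  case Nil then show ?case by simp
next
  case (Cons i u)
  show ?case by (cases x) (auto simp: Lop_def Cons)
qed

lemma Law_apply: "Law v f w = f (v @ w)"
  by (induction v arbitrary: f) (auto simp: Ladj_def)

lemma id_polyalg: "(id :: 'i op) \<in> polyalg"
proof -
  have "Ladj (undefined::'i) \<circ> Lop undefined = id"
    by (auto simp: Ladj_def Lop_def fun_eq_iff)
  then show ?thesis using polyalg.comp[OF polyalg.gen_Ladj polyalg.gen_L] by metis
qed

lemma Lw_polyalg: "Lw u \<in> polyalg"
proof (induction u)
  case Nil show ?case using id_polyalg by (simp only: Lw.simps)
next
  case (Cons i u) show ?case unfolding Lw.simps by (rule polyalg.comp[OF polyalg.gen_L Cons])
qed

lemma Law_polyalg: "Law u \<in> polyalg"
proof (induction u)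
  case Nil show ?case using id_polyalg by (simp only: Law.simps)
next
  case (Cons i u) show ?case unfolding Law.simps by (rule polyalg.comp[OF Cons polyalg.gen_Ladj])
qed

lemma zero_polyalg: "(\<lambda>(f::'i vec) (w::'i list). 0::complex) \<in> polyalg"
  using polyalg.smult[OF id_polyalg, of 0] by simp

lemma polyalg_sum: "finite A \<Longrightarrow> (\<forall>a\<in>A. X a \<in> polyalg) \<Longrightarrow> (\<lambda>f w. \<Sum>a\<in>A. X a f w) \<in> polyalg"
proof (induction A rule: finite_induct)
  case empty then show ?case using zero_polyalg by simp
next
  case (insert x F)
  then show ?case using polyalg.add[of "X x" "\<lambda>f w. \<Sum>a\<in>F. X a f w"] by simp
qed

definition delta :: "'i list \<Rightarrow> 'i vec" where "delta v = (\<lambda>w. if w = v then 1 else 0)"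

definition Pop :: "('i::finite) op \<Rightarrow> nat \<Rightarrow> 'i op" where
  "Pop D N = (\<lambda>f x. \<Sum>m\<in>{..N}. \<Sum>u\<in>words m. \<Sum>v\<in>words m. D (delta v) u * (Lw u \<circ> Law v) f x)"

lemma Pop_polyalg: "Pop D N \<in> polyalg"
proof -
  have a: "(\<lambda>f x. D (delta v) u * (Lw u \<circ> Law v) f x) \<in> polyalg" for u v
    by (rule polyalg.smult[OF polyalg.comp[OF Lw_polyalg Law_polyalg]])
  have b: "(\<lambda>f x. \<Sum>v\<in>words m. D (delta v) u * (Lw u \<circ> Law v) f x) \<in> polyalg" for u m
    using polyalg_sum[of "words m" "\<lambda>v f x. D (delta v) u * (Lw u \<circ> Law v) f x"] a by simp
  have c: "(\<lambda>f x. \<Sum>u\<in>words m. \<Sum>v\<in>words m. D (delta v) u * (Lw u \<circ> Law v) f x) \<in> polyalg" for m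
    using polyalg_sum[of "words m" "\<lambda>u f x. \<Sum>v\<in>words m. D (delta v) u * (Lw u \<circ> Law v) f x"] b by simp
  show ?thesis unfolding Pop_def
    using polyalg_sum[of "{..N}" "\<lambda>m f x. \<Sum>u\<in>words m. \<Sum>v\<in>words m. D (delta v) u * (Lw u \<circ> Law v) f x"] c by simp
qed

lemma E_apply: "(Lw u \<circ> Law v) f x = (if take (length u) x = u then f (v @ drop (length u) x) else 0)"
  by (simp add: Lw_apply Law_apply)

lemma Pop_apply: "Pop D N f x = (\<Sum>m\<in>{..N}. \<Sum>u\<in>words m. \<Sum>v\<in>words m. D (delta v) u *
    (if take m x = u then f (v @ drop m x) else 0))"
  unfolding Pop_def E_apply by (intro sum.cong refl) (auto simp: words_def)

lemma Radj_apply: "Radj j f w = f (w @ [j])" by (simp add: Radj_def)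

lemma Phi_apply: fixes x :: "('i::finite) list" shows "(\<Sum>i\<in>UNIV. Rop i (X (Radj i f)) x) = (if x = [] then 0 else X (Radj (last x) f) (butlast x))"
  by (auto simp: Rop_def sum.delta sum.delta')

lemma term_id:
  assumes "length u = m"
  shows "(if take m x = u then F (drop m x) else 0) -
    (if x \<noteq> [] \<and> take m (butlast x) = u then F (drop m (butlast x) @ [last x]) else 0)
    = (if x = u then F [] else (0::complex))"
proof (cases x rule: rev_exhaust)
  case Nil then show ?thesis using assms by auto
next
  case (snoc x' a)
  show ?thesis
  proof (cases "m \<le> length x'")
    case True
    then have "x \<noteq> u" using assms snoc by auto
    then show ?thesis using True snoc by auto
  next
    case False
    then have "take m x' \<noteq> u" using assms by auto
    moreover have "take m x = u \<longleftrightarrow> x = u" using False snoc assms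
      by (metis le_Suc_eq length_append_singleton not_less_eq_eq take_all_iff)
    moreover have "x = u \<Longrightarrow> drop m x = []" using assms by auto
    ultimately show ?thesis using snoc by auto
  qed
qed

lemma Pop_Phi:
  fixes x :: "('i::finite) list"
  shows "Pop D N f x - (\<Sum>i\<in>UNIV. Rop i (Pop D N (Radj i f)) x)
   = (if length x \<le> N then (\<Sum>v\<in>words (length x). D (delta v) x * f v) else 0)"
proof -
  have "Pop D N f x - (\<Sum>i\<in>UNIV. Rop i (Pop D N (Radj i f)) x) =
     (\<Sum>m\<in>{..N}. \<Sum>u\<in>words m. \<Sum>v\<in>words m. D (delta v) u *
       ((if take m x = u then f (v @ drop m x) else 0) -
        (if x \<noteq> [] \<and> take m (butlast x) = u then f (v @ (drop m (butlast x) @ [last x])) else 0)))"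
    apply (subst Phi_apply)
    by (cases "x = []") (auto simp: Pop_apply Radj_def right_diff_distrib sum_subtractf append_assoc cong: if_cong)
  also have "\<dots> = (\<Sum>m\<in>{..N}. \<Sum>u\<in>words m. \<Sum>v\<in>words m. D (delta v) u * (if x = u then f v else 0))"
  proof (intro sum.cong refl)
    fix m and u v :: "'i list" assume "u \<in> words m"
    then have "length u = m" by (simp add: words_def)
    from term_id[OF this, of x "\<lambda>z. f (v @ z)"]
    show "D (delta v) u * ((if take m x = u then f (v @ drop m x) else 0) -
        (if x \<noteq> [] \<and> take m (butlast x) = u then f (v @ (drop m (butlast x) @ [last x])) else 0))
       = D (delta v) u * (if x = u then f v else 0)" by simp
  qed
  also have "\<dots> = (\<Sum>m\<in>{..N}. if length x = m then (\<Sum>v\<in>words m. D (delta v) x * f v) else 0)"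
  proof (intro sum.cong refl)
    fix m
    have "(\<Sum>u\<in>words m. \<Sum>v\<in>words m. D (delta v) u * (if x = u then f v else 0)) =
          (\<Sum>u\<in>words m. if x = u then (\<Sum>v\<in>words m. D (delta v) x * f v) else 0)"
      by (intro sum.cong refl) auto
    also have "\<dots> = (if length x = m then (\<Sum>v\<in>words m. D (delta v) x * f v) else 0)"
      by (subst sum.delta'[OF finite_words]) (simp add: words_def)
    finally show "(\<Sum>u\<in>words m. \<Sum>v\<in>words m. D (delta v) u * (if x = u then f v else 0)) =
          (if length x = m then (\<Sum>v\<in>words m. D (delta v) x * f v) else 0)" .
  qed
  also have "\<dots> = (if length x \<le> N then (\<Sum>v\<in>words (length x). D (delta v) x * f v) else 0)"
    by (subst sum.delta') auto
  finally show ?thesis .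
qed

lemma Pop_level: fixes f :: "('i::finite) vec" assumes "in_level n f" shows "in_level n (Pop D N f)"
  unfolding in_level_def
proof (intro allI impI)
  fix x :: "'i list" assume x: "length x \<noteq> n"
  show "Pop D N f x = 0" unfolding Pop_apply
  proof (intro sum.neutral ballI)
    fix m and u v :: "'i list" assume "m \<in> {..N}" "u \<in> words m" "v \<in> words m"
    then have "length u = m" "length v = m" by (auto simp: words_def)
    have "take m x = u \<Longrightarrow> length (v @ drop m x) = length x"
      using \<open>length u = m\<close> \<open>length v = m\<close> by (cases "m \<le> length x") auto
    then show "D (delta v) u * (if take m x = u then f (v @ drop m x) else 0) = 0"
      using assms x by (auto simp: in_level_def)
  qed
qed

lemma Pop_restr: fixes x :: "('i::finite) list" shows "Pop D N f x = Pop D N (restr (length x) f) x"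
  unfolding Pop_apply
proof (intro sum.cong refl)
  fix m and u v :: "'i list" assume "m \<in> {..N}" "u \<in> words m" "v \<in> words m"
  then have "length u = m" "length v = m" by (auto simp: words_def)
  then show "D (delta v) u * (if take m x = u then f (v @ drop m x) else 0) =
             D (delta v) u * (if take m x = u then restr (length x) f (v @ drop m x) else 0)"
    by (auto simp: restr_def)
qed

lemma Radj_level_Suc: "in_level (Suc k) f \<Longrightarrow> in_level k (Radj j f)"
  by (auto simp: in_level_def Radj_apply)

lemma Radj_level_0: "in_level 0 f \<Longrightarrow> Radj j f = (\<lambda>w. 0)"
  by (auto simp: in_level_def Radj_apply)

lemma delta_level: "in_level (length v) (delta v)" by (auto simp: in_level_def delta_def)

lemma vnorm_sq: assumes "in_level n (g::('i::finite) vec)"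
  shows "(vnorm g)\<^sup>2 = (\<Sum>w\<in>words n. (cmod (g w))\<^sup>2)"
  unfolding vnorm_level[OF assms] L2_set_def by (simp add: sum_nonneg)

lemma words_Suc_sum: "(\<Sum>x\<in>words (Suc k). F x) = (\<Sum>j\<in>(UNIV::('i::finite) set). \<Sum>w\<in>words k. F (w @ [j]))"
proof -
  have img: "words (Suc k) = (\<lambda>(w,j). w @ [j]) ` (words k \<times> (UNIV::'i set))"
  proof (rule set_eqI, rule iffI)
    fix x :: "'i list" assume "x \<in> words (Suc k)"
    then have "x \<noteq> []" "length (butlast x) = k" by (auto simp: words_def)
    then show "x \<in> (\<lambda>(w,j). w @ [j]) ` (words k \<times> UNIV)"
      by (intro image_eqI[of _ _ "(butlast x, last x)"]) (auto simp: words_def)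
  qed (auto simp: words_def)
  have inj: "inj_on (\<lambda>(w,j). w @ [j]) (words k \<times> (UNIV::'i set))"
    by (auto simp: inj_on_def)
  have "(\<Sum>x\<in>words (Suc k). F x) = (\<Sum>(w,j)\<in>words k \<times> (UNIV::'i set). F (w @ [j]))"
    unfolding img by (subst sum.reindex[OF inj]) (simp add: case_prod_unfold)
  also have "\<dots> = (\<Sum>w\<in>words k. \<Sum>j\<in>(UNIV::'i set). F (w @ [j]))"
    by (subst sum.cartesian_product) simp
  also have "\<dots> = (\<Sum>j\<in>(UNIV::'i set). \<Sum>w\<in>words k. F (w @ [j]))"
    by (rule sum.swap)
  finally show ?thesis .
qed

lemma alg_helper: fixes a b c d e :: complex
  assumes "e = a - b" "c - d = (if Q then 0 else e)" "f = b - d"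
  shows "a - c = (if Q then e else 0) + f"
proof -
  have a: "a = b + e" using assms(1) by simp
  have b: "b = d + f" using assms(3) by simp
  show ?thesis
  proof (cases Q)
    case True then have "c = d" using assms(2) by simp
    then show ?thesis using True by (simp add: a b)
  next
    case False then have "c = d + e" using assms(2) by (simp add: diff_eq_eq)
    then show ?thesis using False by (simp add: a b)
  qed
qed

locale fock =
  fixes T :: "('i::finite) op" and D :: "'i op" and N :: nat and ln :: "nat \<Rightarrow> real"
  assumes Tb: "bounded_op T" and Tbd: "block_diagonal T"
    and Ddef: "D = (\<lambda>f w. T f w - (\<Sum>i\<in>UNIV. Rop i (T (Radj i f)) w))"
    and Db: "bounded_op D"
    and ln_nonneg: "\<And>n. ln n \<ge> 0"
    and ln_bound: "\<And>n f. in_level n f \<Longrightarrow> vnorm (D f) \<le> ln n * vnorm f"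
begin

definition G :: "'i op" where "G = (\<lambda>f w. T f w - Pop D N f w)"

lemma T_level: assumes f: "in_level n f" shows "in_level n (T f)"
proof -
  have "f \<in> ell2" by (rule level_ell2[OF f])
  then show ?thesis using Tbd f unfolding block_diagonal_def by blast
qed

lemma Phi_level:
  fixes X :: "'i op" and f :: "'i vec"
  assumes X0: "X (\<lambda>w. 0) = (\<lambda>w. 0)" and Xl: "\<And>k g. in_level k g \<Longrightarrow> in_level k (X g)"
    and f: "in_level n f"
  shows "in_level n (\<lambda>w. \<Sum>i\<in>UNIV. Rop i (X (Radj i f)) w)"
  unfolding in_level_def Phi_apply
proof (intro allI impI)
  fix x :: "'i list" assume x: "length x \<noteq> n"
  show "(if x = [] then 0 else X (Radj (last x) f) (butlast x)) = 0"
  proof (cases n)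
    case 0
    have "Radj (last x) f = (\<lambda>w. 0)" by (rule Radj_level_0) (use f 0 in simp)
    then show ?thesis using X0 by simp
  next
    case (Suc k)
    have "in_level k (X (Radj (last x) f))" by (rule Xl[OF Radj_level_Suc]) (use f Suc in simp)
    moreover have "x \<noteq> [] \<Longrightarrow> length (butlast x) \<noteq> k" using x Suc by auto
    ultimately show ?thesis by (auto simp: in_level_def)
  qed
qed

lemma D_level: assumes "in_level n f" shows "in_level n (D f)"
proof -
  have a: "in_level n (T f)" using T_level assms .
  have b: "in_level n (\<lambda>w. \<Sum>i\<in>UNIV. Rop i (T (Radj i f)) w)"
    by (rule Phi_level[where X=T, OF bop_zero[OF Tb] T_level assms])
  show ?thesis using a b unfolding Ddef in_level_def by simp
qed

lemma D_lin: assumes "in_level n f" shows "D f x = (\<Sum>v\<in>words n. D (delta v) x * f v)"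
proof -
  have fe: "f = (\<lambda>w. \<Sum>v\<in>words n. f v * delta v w)"
  proof
    fix w
    have "(\<Sum>v\<in>words n. f v * delta v w) = (\<Sum>v\<in>words n. if w = v then f v else 0)"
      by (intro sum.cong) (auto simp: delta_def)
    also have "\<dots> = (if w \<in> words n then f w else 0)" by (rule sum.delta'[OF finite_words])
    finally show "f w = (\<Sum>v\<in>words n. f v * delta v w)"
      using assms by (auto simp: words_def in_level_def)
  qed
  have el: "\<forall>v\<in>words n. (\<lambda>w. f v * delta v w) \<in> ell2"
    using ell2_scale level_ell2[OF delta_level] by blast
  have "D f = (\<lambda>w. \<Sum>v\<in>words n. D (\<lambda>w. f v * delta v w) w)"
    by (subst fe) (rule bop_sum[OF Db finite_words el])
  also have "\<dots> = (\<lambda>w. \<Sum>v\<in>words n. f v * D (delta v) w)"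
    using bop_scale[OF Db level_ell2[OF delta_level]] by simp
  finally show ?thesis by (simp add: mult.commute)
qed

lemma P_Phi_level: assumes "in_level n f"
  shows "Pop D N f x - (\<Sum>i\<in>UNIV. Rop i (Pop D N (Radj i f)) x) = (if length x \<le> N then D f x else 0)"
proof (cases "length x = n")
  case True then show ?thesis unfolding Pop_Phi using D_lin[OF assms] by simp
next
  case False
  have "D f x = 0" using D_level[OF assms] False by (auto simp: in_level_def)
  moreover have "(\<Sum>v\<in>words (length x). D (delta v) x * f v) = 0"
    using assms False by (intro sum.neutral) (auto simp: in_level_def words_def)
  ultimately show ?thesis unfolding Pop_Phi by simp
qed

lemma G_zero: "G (\<lambda>w. 0) = (\<lambda>w. 0)"
  unfolding G_def using bop_zero[OF Tb] by (simp add: Pop_apply)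

lemma G_level: assumes f: "in_level n f" shows "in_level n (G f)"
proof -
  have a: "in_level n (T f)" by (rule T_level[OF f])
  have b: "in_level n (Pop D N f)" by (rule Pop_level[OF f])
  show ?thesis using a b by (simp add: G_def in_level_def)
qed

lemma G_eq: assumes "in_level n f"
  shows "G f x = (if N < length x then D f x else 0) + (\<Sum>i\<in>UNIV. Rop i (G (Radj i f)) x)"
proof -
  have "(\<Sum>i\<in>UNIV. Rop i (G (Radj i f)) x) =
    (\<Sum>i\<in>UNIV. Rop i (T (Radj i f)) x) - (\<Sum>i\<in>UNIV. Rop i (Pop D N (Radj i f)) x)"
    unfolding Phi_apply by (simp add: G_def)
  moreover have "D f x = T f x - (\<Sum>i\<in>UNIV. Rop i (T (Radj i f)) x)" by (simp add: Ddef)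
  moreover note P_Phi_level[OF assms, of x]
  ultimately show ?thesis unfolding G_def
    by (intro alg_helper[where b="\<Sum>i\<in>UNIV. Rop i (T (Radj i f)) x" and d="\<Sum>i\<in>UNIV. Rop i (Pop D N (Radj i f)) x"]) auto
qed

definition bsum :: "nat \<Rightarrow> real" where "bsum n = (\<Sum>m\<in>{N<..n}. ln m)"

lemma bsum_Suc: "bsum (Suc k) = bsum k + (if N < Suc k then ln (Suc k) else 0)"
proof (cases "N < Suc k")
  case True
  then have "{N<..Suc k} = insert (Suc k) {N<..k}" by auto
  then show ?thesis using True by (simp add: bsum_def)
next
  case False
  then have "{N<..Suc k} = {}" "{N<..k} = {}" by auto
  then show ?thesis using False by (simp add: bsum_def)
qed

lemma bsum_nonneg: "bsum n \<ge> 0" unfolding bsum_def by (simp add: sum_nonneg ln_nonneg)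

lemma G_step: assumes f: "in_level n f"
  shows "vnorm (G f) \<le> (if N < n then ln n else 0) * vnorm f +
     L2_set (\<lambda>x. cmod (\<Sum>i\<in>UNIV. Rop i (G (Radj i f)) x)) (words n)"
proof -
  define A where "A = (\<lambda>x. if N < length x then D f x else 0)"
  define B where "B = (\<lambda>x. \<Sum>i\<in>UNIV. Rop i (G (Radj i f)) x)"
  have "vnorm (G f) = L2_set (\<lambda>x. cmod (G f x)) (words n)" by (rule vnorm_level[OF G_level[OF f]])
  also have "\<dots> = L2_set (\<lambda>x. cmod (A x + B x)) (words n)"
    using G_eq[OF f] by (simp add: A_def B_def)
  also have "\<dots> \<le> L2_set (\<lambda>x. cmod (A x) + cmod (B x)) (words n)"
    by (rule L2_set_mono) (auto simp: norm_triangle_ineq)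
  also have "\<dots> \<le> L2_set (\<lambda>x. cmod (A x)) (words n) + L2_set (\<lambda>x. cmod (B x)) (words n)"
    by (rule L2_set_triangle_ineq)
  also have "L2_set (\<lambda>x. cmod (A x)) (words n) = (if N < n then vnorm (D f) else 0)"
  proof (cases "N < n")
    case True
    have "L2_set (\<lambda>x. cmod (A x)) (words n) = L2_set (\<lambda>x. cmod (D f x)) (words n)"
      by (rule L2_set_cong) (use True in \<open>auto simp: A_def words_def\<close>)
    then show ?thesis using True vnorm_level[OF D_level[OF f]] by simp
  next
    case False
    have "L2_set (\<lambda>x. cmod (A x)) (words n) = 0"
      by (rule L2_set_0') (use False in \<open>auto simp: A_def words_def\<close>)
    then show ?thesis using False by simp
  qed
  also have "(if N < n then vnorm (D f) else 0) \<le> (if N < n then ln n else 0) * vnorm f"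
    using ln_bound[OF f] vnorm_nonneg by auto
  finally show ?thesis by (simp add: B_def)
qed

lemma G_bound: "in_level n f \<Longrightarrow> vnorm (G f) \<le> bsum n * vnorm f"
proof (induction n arbitrary: f)
  case 0
  have "L2_set (\<lambda>x. cmod (\<Sum>i\<in>UNIV. Rop i (G (Radj i f)) x)) (words 0) = 0"
    by (rule L2_set_0') (auto simp: words_def Phi_apply)
  then show ?case using G_step[OF 0] by (simp add: bsum_def)
next
  case (Suc k)
  define B where "B = (\<lambda>x. \<Sum>i\<in>UNIV. Rop i (G (Radj i f)) x)"
  have lev: "in_level k (Radj j f)" for j using Radj_level_Suc[OF Suc.prems] .
  have B_app: "B (w @ [j]) = G (Radj j f) w" for w j by (simp add: B_def Phi_apply)
  have "(\<Sum>x\<in>words (Suc k). (cmod (B x))\<^sup>2) = (\<Sum>j\<in>UNIV. \<Sum>w\<in>words k. (cmod (G (Radj j f) w))\<^sup>2)"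
    by (subst words_Suc_sum) (simp add: B_app)
  also have "\<dots> = (\<Sum>j\<in>UNIV. (vnorm (G (Radj j f)))\<^sup>2)"
    by (simp add: vnorm_sq[OF G_level[OF lev]])
  also have "\<dots> \<le> (\<Sum>j\<in>UNIV. (bsum k * vnorm (Radj j f))\<^sup>2)"
    by (intro sum_mono power_mono Suc.IH lev vnorm_nonneg)
  also have "\<dots> = (bsum k)\<^sup>2 * (\<Sum>j\<in>UNIV. (vnorm (Radj j f))\<^sup>2)"
    by (simp add: power_mult_distrib sum_distrib_left)
  also have "(\<Sum>j\<in>UNIV. (vnorm (Radj j f))\<^sup>2) = (\<Sum>j\<in>UNIV. \<Sum>w\<in>words k. (cmod (f (w @ [j])))\<^sup>2)"
    by (simp add: vnorm_sq[OF lev] Radj_apply)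
  also have "\<dots> = (vnorm f)\<^sup>2"
    by (simp add: vnorm_sq[OF Suc.prems] words_Suc_sum)
  finally have "(\<Sum>x\<in>words (Suc k). (cmod (B x))\<^sup>2) \<le> (bsum k * vnorm f)\<^sup>2"
    by (simp add: power_mult_distrib)
  then have "L2_set (\<lambda>x. cmod (B x)) (words (Suc k)) \<le> sqrt ((bsum k * vnorm f)\<^sup>2)"
    unfolding L2_set_def by (rule real_sqrt_le_mono)
  also have "\<dots> = bsum k * vnorm f" using bsum_nonneg[of k] vnorm_nonneg[of f] by simp
  finally have LB: "L2_set (\<lambda>x. cmod (B x)) (words (Suc k)) \<le> bsum k * vnorm f" .
  have "vnorm (G f) \<le> (if N < Suc k then ln (Suc k) else 0) * vnorm f + bsum k * vnorm f"
    using G_step[OF Suc.prems] LB unfolding B_def by linarith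
  also have "\<dots> = bsum (Suc k) * vnorm f" by (simp add: bsum_Suc algebra_simps)
  finally show ?case .
qed

end

lemma vnorm_zero[simp]: "vnorm (\<lambda>w. 0) = 0" by (simp add: vnorm_def)

lemma vnorm_sq_gen: "(vnorm f)\<^sup>2 = (\<Sum>\<^sub>\<infinity>w. (cmod (f w))\<^sup>2)"
  unfolding vnorm_def by (simp add: infsum_nonneg)

lemma vnorm_scale: assumes "h \<in> ell2" shows "vnorm (\<lambda>w. c * h w) = cmod c * vnorm h"
proof -
  have "(\<Sum>\<^sub>\<infinity>w. (cmod (c * h w))\<^sup>2) = (\<Sum>\<^sub>\<infinity>w. (cmod c)\<^sup>2 * (cmod (h w))\<^sup>2)"
    by (simp add: norm_mult power_mult_distrib)
  also have "\<dots> = (cmod c)\<^sup>2 * (\<Sum>\<^sub>\<infinity>w. (cmod (h w))\<^sup>2)"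
    by (rule infsum_cmult_right) (use assms in \<open>simp add: ell2_def\<close>)
  finally show ?thesis unfolding vnorm_def by (simp add: real_sqrt_mult)
qed

lemma level_zero: assumes "in_level n (f::('i::finite) vec)" "vnorm f = 0" shows "f = (\<lambda>w. 0)"
proof
  fix w
  have "\<forall>x\<in>words n. cmod (f x) = 0"
    using assms(2) unfolding vnorm_level[OF assms(1)] by (simp add: L2_set_eq_0_iff)
  then show "f w = 0" using assms(1) by (cases "length w = n") (auto simp: words_def in_level_def)
qed

lemma level_norm_props:
  fixes S :: "('i::finite) op"
  assumes S: "bounded_op S"
  shows "level_norm S n \<ge> 0" and "in_level n f \<Longrightarrow> vnorm (S f) \<le> level_norm S n * vnorm f"
proof -
  define M where "M = {vnorm (S f) |f. f \<in> ell2 \<and> in_level n f \<and> vnorm f \<le> 1}"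
  obtain C where C: "C > 0" "\<forall>g\<in>ell2. vnorm (S g) \<le> C * vnorm g" using bop_bound[OF S] by blast
  have bdd: "bdd_above M"
  proof (rule bdd_aboveI)
    fix y assume "y \<in> M"
    then obtain g where g: "y = vnorm (S g)" "g \<in> ell2" "vnorm g \<le> 1" by (auto simp: M_def)
    have "y \<le> C * vnorm g" using C g by blast
    also have "\<dots> \<le> C" using g C by (simp add: mult_le_cancel_left1)
    finally show "y \<le> C" .
  qed
  have z: "in_level n (\<lambda>w::'i list. 0::complex)" by (simp add: in_level_def)
  have "0 \<in> M" unfolding M_def using bop_zero[OF S] z
    by (intro CollectI exI[of _ "\<lambda>w. 0"]) simp
  then show ln0: "level_norm S n \<ge> 0" unfolding level_norm_def M_def[symmetric]
    by (rule cSup_upper[OF _ bdd])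
  assume f: "in_level n f"
  show "vnorm (S f) \<le> level_norm S n * vnorm f"
  proof (cases "vnorm f = 0")
    case True
    then have "f = (\<lambda>w. 0)" by (rule level_zero[OF f])
    then show ?thesis using bop_zero[OF S] by simp
  next
    case False
    then have pos: "vnorm f > 0" using vnorm_nonneg[of f] by simp
    define g where "g = (\<lambda>w. complex_of_real (1 / vnorm f) * f w)"
    have fe: "f \<in> ell2" by (rule level_ell2[OF f])
    have gl: "in_level n g" using f by (simp add: g_def in_level_def)
    have "vnorm g = cmod (complex_of_real (1 / vnorm f)) * vnorm f" unfolding g_def by (rule vnorm_scale[OF fe])
    then have vg: "vnorm g = 1" using pos by (simp add: norm_divide)
    have Sg: "S g = (\<lambda>w. complex_of_real (1 / vnorm f) * S f w)" unfolding g_def by (rule bop_scale[OF S fe])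
    have "vnorm (S g) = cmod (complex_of_real (1 / vnorm f)) * vnorm (S f)"
      unfolding Sg by (rule vnorm_scale[OF bop_ell2[OF S fe]])
    then have "vnorm (S g) = vnorm (S f) / vnorm f" using pos by (simp add: norm_divide)
    moreover have "vnorm (S g) \<in> M" unfolding M_def using level_ell2[OF gl] gl vg
      by (intro CollectI exI[of _ g]) simp
    then have "vnorm (S g) \<le> level_norm S n" unfolding level_norm_def M_def[symmetric]
      by (rule cSup_upper[OF _ bdd])
    ultimately show ?thesis using pos by (simp add: divide_le_eq mult.commute)
  qed
qed

lemma global_bound:
  fixes G :: "('i::finite) op" and f :: "'i vec"
  assumes restrG: "\<And>f x. f \<in> ell2 \<Longrightarrow> G f x = G (restr (length x) f) x"
    and lev: "\<And>n f. in_level n f \<Longrightarrow> in_level n (G f)"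
    and bnd: "\<And>n f. in_level n f \<Longrightarrow> vnorm (G f) \<le> c * vnorm f"
    and c: "c \<ge> 0" and f: "f \<in> ell2"
  shows "vnorm (G f) \<le> c * vnorm f"
proof -
  define q where "q = (\<lambda>x. (cmod (G f x))\<^sup>2)"
  have fs: "(\<lambda>w. (cmod (f w))\<^sup>2) summable_on UNIV" using f by (simp add: ell2_def)
  have main: "infsum q UNIV \<le> c\<^sup>2 * (vnorm f)\<^sup>2"
  proof (cases "q summable_on UNIV")
    case False
    then show ?thesis by (simp add: infsum_not_exists)
  next
    case True
    show ?thesis
    proof (rule infsum_le_finite_sums[OF True])
      fix F :: "'i list set" assume F: "finite F" "F \<subseteq> UNIV"
      define K where "K = Max (insert 0 (length ` F))"
      define U where "U = (\<Union>n\<in>{..K}. words n :: 'i list set)"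
      have FU: "F \<subseteq> U" using F(1) by (auto simp: U_def K_def words_def)
      have Uf: "finite U" by (simp add: U_def)
      have disj: "\<forall>i\<in>{..K}. \<forall>j\<in>{..K}. i \<noteq> j \<longrightarrow> words i \<inter> words j = ({}::'i list set)"
        by (auto simp: words_def)
      have "sum q F \<le> sum q U" by (rule sum_mono2[OF Uf FU]) (simp add: q_def)
      also have "\<dots> = (\<Sum>n\<le>K. \<Sum>x\<in>words n. q x)"
        unfolding U_def by (rule sum.UNION_disjoint) (use disj in auto)
      also have "\<dots> \<le> (\<Sum>n\<le>K. c\<^sup>2 * (\<Sum>x\<in>words n. (cmod (f x))\<^sup>2))"
      proof (rule sum_mono)
        fix n assume "n \<in> {..K}"
        have rl: "in_level n (restr n f)" by simp
        have "(\<Sum>x\<in>words n. q x) = (\<Sum>x\<in>words n. (cmod (G (restr n f) x))\<^sup>2)"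
          using restrG[OF f] by (intro sum.cong) (auto simp: q_def words_def)
        also have "\<dots> = (vnorm (G (restr n f)))\<^sup>2" by (rule vnorm_sq[OF lev[OF rl], symmetric])
        also have "\<dots> \<le> (c * vnorm (restr n f))\<^sup>2"
          by (rule power_mono[OF bnd[OF rl] vnorm_nonneg])
        also have "\<dots> = c\<^sup>2 * (vnorm (restr n f))\<^sup>2" by (simp add: power_mult_distrib)
        also have "(vnorm (restr n f))\<^sup>2 = (\<Sum>x\<in>words n. (cmod (f x))\<^sup>2)"
          unfolding vnorm_sq[OF rl] by (intro sum.cong) (auto simp: restr_def words_def)
        finally show "(\<Sum>x\<in>words n. q x) \<le> c\<^sup>2 * (\<Sum>x\<in>words n. (cmod (f x))\<^sup>2)" .
      qed
      also have "\<dots> = c\<^sup>2 * (\<Sum>x\<in>U. (cmod (f x))\<^sup>2)"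
        unfolding U_def sum_distrib_left[symmetric]
        by (subst sum.UNION_disjoint) (use disj in auto)
      also have "\<dots> \<le> c\<^sup>2 * (vnorm f)\<^sup>2"
        unfolding vnorm_sq_gen
        by (intro mult_left_mono finite_sum_le_infsum[OF fs Uf]) auto
      finally show "sum q F \<le> c\<^sup>2 * (vnorm f)\<^sup>2" .
    qed
  qed
  have "vnorm (G f) = sqrt (infsum q UNIV)" by (simp add: vnorm_def q_def)
  also have "\<dots> \<le> sqrt (c\<^sup>2 * (vnorm f)\<^sup>2)" by (rule real_sqrt_le_mono[OF main])
  also have "\<dots> = c * vnorm f" using c vnorm_nonneg[of f] by (simp add: real_sqrt_mult)
  finally show ?thesis .
qed

context fock begin

lemma G_restr: fixes f :: "'i vec" shows "f \<in> ell2 \<Longrightarrow> G f x = G (restr (length x) f) x"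
  unfolding G_def using bd_restr[OF Tb Tbd, of f x "length x"] Pop_restr[of D N f x] by simp

lemma G_global: fixes f :: "'i vec" assumes "f \<in> ell2" "\<And>n. bsum n \<le> c" "c \<ge> 0"
  shows "vnorm (G f) \<le> c * vnorm f"
proof (rule global_bound[where G=G])
  show "\<And>f x. f \<in> ell2 \<Longrightarrow> G f x = G (restr (length x) f) x" by (rule G_restr)
  show "\<And>n f. in_level n f \<Longrightarrow> in_level n (G f)" by (rule G_level)
  show "\<And>n f. in_level n f \<Longrightarrow> vnorm (G f) \<le> c * vnorm f"
  proof -
    fix n and f :: "'i vec" assume "in_level n f"
    have "vnorm (G f) \<le> bsum n * vnorm f" by (rule G_bound[OF \<open>in_level n f\<close>])
    also have "\<dots> \<le> c * vnorm f" by (rule mult_right_mono[OF assms(2) vnorm_nonneg])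
    finally show "vnorm (G f) \<le> c * vnorm f" .
  qed
qed (use assms in auto)

end

theorem proposition3p5:
  fixes T :: "('i::finite) op"
  assumes "CARD('i) \<ge> 2"
    and "bounded_op T"
    and "block_diagonal T"
    and "(\<lambda>f w. T f w - (\<Sum>i\<in>UNIV. Rop i (T (Radj i f)) w)) \<in> classS"
  shows "T \<in> Calg"
proof -
  define D where "D = (\<lambda>f w. T f w - (\<Sum>i\<in>UNIV. Rop i (T (Radj i f)) w))"
  have Dc: "D \<in> classS" using assms(4) by (simp add: D_def)
  then have Db: "bounded_op D" and Ds: "summable (level_norm D)" by (auto simp: classS_def)
  define ln where "ln = level_norm D"
  have lnn: "\<And>n. ln n \<ge> 0" unfolding ln_def by (rule level_norm_props(1)[OF Db])
  have lnb: "\<And>n f. in_level n f \<Longrightarrow> vnorm (D f) \<le> ln n * vnorm f"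
    unfolding ln_def by (rule level_norm_props(2)[OF Db])
  have lns: "summable ln" using Ds by (simp add: ln_def)
  show "T \<in> Calg" unfolding Calg_def
  proof (intro CollectI conjI allI impI)
    show "bounded_op T" by (rule assms(2))
    fix e :: real assume e: "e > 0"
    obtain N where N: "\<forall>n\<ge>N. norm (\<Sum>i. ln (i + n)) < e" using suminf_exist_split[OF e lns] by blast
    define c where "c = (\<Sum>i. ln (i + Suc N))"
    have shs: "summable (\<lambda>i. ln (i + Suc N))" by (rule summable_ignore_initial_segment[OF lns])
    have c0: "c \<ge> 0" unfolding c_def by (rule suminf_nonneg[OF shs]) (simp add: lnn)
    have ce: "c < e" using N[rule_format, of "Suc N"] c0 by (simp add: c_def)
    interpret F: fock T D N ln
      by unfold_locales (rule assms(2), rule assms(3), rule D_def, rule Db, rule lnn, erule lnb)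
    have bs: "F.bsum n \<le> c" for n
    proof -
      have img: "{N<..n} = (\<lambda>m. m + Suc N) ` {..<n - N}"
      proof (rule set_eqI, rule iffI)
        fix x assume "x \<in> {N<..n}"
        then show "x \<in> (\<lambda>m. m + Suc N) ` {..<n - N}"
          by (intro image_eqI[of _ _ "x - Suc N"]) auto
      qed auto
      have inj: "inj_on (\<lambda>m. m + Suc N) {..<n - N}" by (simp add: inj_on_def)
      have "F.bsum n = (\<Sum>m\<in>{..<n - N}. ln (m + Suc N))"
        unfolding F.bsum_def img by (subst sum.reindex[OF inj]) simp
      also have "\<dots> \<le> c" unfolding c_def
        by (rule sum_le_suminf[OF shs]) (auto simp: lnn)
      finally show ?thesis .
    qed
    have "opnorm F.G \<le> c"
      unfolding opnorm_def
    proof (rule cSup_least)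
      have "vnorm (F.G (\<lambda>w. 0)) \<in> {vnorm (F.G f) |f. f \<in> ell2 \<and> vnorm f \<le> 1}"
        by (intro CollectI exI[of _ "\<lambda>w. 0"]) simp
      then show "{vnorm (F.G f) |f. f \<in> ell2 \<and> vnorm f \<le> 1} \<noteq> {}" by blast
      fix y assume "y \<in> {vnorm (F.G f) |f. f \<in> ell2 \<and> vnorm f \<le> 1}"
      then obtain f where f: "y = vnorm (F.G f)" "f \<in> ell2" "vnorm f \<le> 1" by blast
      have "y \<le> c * vnorm f" unfolding f(1) by (rule F.G_global[OF f(2) bs c0])
      also have "\<dots> \<le> c" using f(3) c0 by (simp add: mult_left_le)
      finally show "y \<le> c" .
    qed
    then have "opnorm (\<lambda>f w. T f w - Pop D N f w) < e" using ce by (simp add: F.G_def)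
    then show "\<exists>P\<in>polyalg. opnorm (\<lambda>f w. T f w - P f w) < e"
      using Pop_polyalg[of D N] by blast
  qed
qed

end
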